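(* Let $d\geq 2$ and let $\mathsf{M}_1,\mathsf{M}_2$ be two sharp $d$-outcome measurements on $\mathbb{C}^d$, i.e. $\mathsf{M}_1(x)=|\varphi_x\rangle\langle\varphi_x|$ and $\mathsf{M}_2(y)=|\psi_y\rangle\langle\psi_y|$ for orthonormal bases $\{\varphi_x\}_{x=1}^d$, $\{\psi_y\}_{y=1}^d$. Then $$\bar{P}_{\rm qrac}(\mathsf{M}_1,\mathsf{M}_2)=\frac{1}{2d^2}\sum_{x,y=1}^d \big\|\mathsf{M}_1(x)+\mathsf{M}_2(y)\big\| \geq \frac12\left(1+\frac1d\right),$$ with equality if and only if $\mathsf{M}_1$ and $\mathsf{M}_2$ are compatible (equivalently, there is a permutation $\sigma$ of $\{1,\dots,d\}$ with $\mathsf{M}_2(y)=\mathsf{M}_1(\sigma(y))$ for all $y$).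
   Context: $\|\cdot\|$ is the operator norm. Two POVMs $\mathsf{M}_1,\mathsf{M}_2$ are compatible if there is a POVM $\mathsf{G}$ on the product outcome set with $\sum_y\mathsf{G}(x,y)=\mathsf{M}_1(x)$ and $\sum_x\mathsf{G}(x,y)=\mathsf{M}_2(y)$. $\bar P_{\rm qrac}$ is the optimal (over encodings) average success probability in the $(2,d)$ quantum random access code, given by the displayed formula, and $\frac12(1+\frac1d)$ is the optimal classical $(2,d)$ random access code success probability. *)

theory Defs
  imports "HOL-Analysis.Analysis"
begin

type_synonym 'n cmat = "complex ^ 'n ^ 'n"

definition cinner :: "complex ^ 'n::finite \<Rightarrow> complex ^ 'n \<Rightarrow> complex" where
  "cinner u v = (\<Sum>i\<in>UNIV. cnj (u $ i) * v $ i)"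

definition orthonormal_basis :: "('n::finite \<Rightarrow> complex ^ 'n) \<Rightarrow> bool" where
  "orthonormal_basis b \<longleftrightarrow> (\<forall>x y. cinner (b x) (b y) = (if x = y then 1 else 0))"

definition ketbra :: "complex ^ 'n::finite \<Rightarrow> 'n cmat" where
  "ketbra v = (\<chi> i j. v $ i * cnj (v $ j))"

definition psd :: "'n::finite cmat \<Rightarrow> bool" where
  "psd A \<longleftrightarrow> (\<forall>v. Im (cinner v (A *v v)) = 0 \<and> Re (cinner v (A *v v)) \<ge> 0)"

definition povm :: "('a::finite \<Rightarrow> 'n::finite cmat) \<Rightarrow> bool" where
  "povm M \<longleftrightarrow> (\<forall>x. psd (M x)) \<and> (\<Sum>x\<in>UNIV. M x) = mat 1"

definition compatible :: "('a::finite \<Rightarrow> 'n::finite cmat) \<Rightarrow> ('b::finite \<Rightarrow> 'n cmat) \<Rightarrow> bool" where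
  "compatible M1 M2 \<longleftrightarrow> (\<exists>G :: 'a \<times> 'b \<Rightarrow> 'n cmat. povm G \<and>
      (\<forall>x. (\<Sum>y\<in>UNIV. G (x, y)) = M1 x) \<and> (\<forall>y. (\<Sum>x\<in>UNIV. G (x, y)) = M2 y))"

definition opnorm :: "'n::finite cmat \<Rightarrow> real" where
  "opnorm A = onorm (\<lambda>v. A *v v)"

definition P_qrac :: "('n::finite \<Rightarrow> 'n cmat) \<Rightarrow> ('n \<Rightarrow> 'n cmat) \<Rightarrow> real" where
  "P_qrac M1 M2 = (1 / (2 * real CARD('n)^2)) * (\<Sum>x\<in>UNIV. \<Sum>y\<in>UNIV. opnorm (M1 x + M2 y))"

end

theory Submission
  imports Defs
begin

lemma mv_comp: "(A *v v) $ i = (\<Sum>j\<in>UNIV. A $ i $ j * v $ j)"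
  by (simp add: matrix_vector_mult_def)

lemma cmod_sq1: "z * cnj z = (complex_of_real (cmod z))^2"
  using complex_norm_square[of z] by simp
lemma cmod_sq2: "cnj z * z = (complex_of_real (cmod z))^2"
  using complex_norm_square[of z] by (simp add: mult.commute)

lemma cinner_add_right: "cinner u (v + w) = cinner u v + cinner u w"
  by (simp add: cinner_def distrib_left sum.distrib)
lemma cinner_add_left: "cinner (u + v) w = cinner u w + cinner v w"
  by (simp add: cinner_def distrib_right sum.distrib)
lemma cinner_diff_right: "cinner u (v - w) = cinner u v - cinner u w"
  by (simp add: cinner_def right_diff_distrib sum_subtractf)
lemma cinner_diff_left: "cinner (u - v) w = cinner u w - cinner v w"
  by (simp add: cinner_def left_diff_distrib sum_subtractf)
lemma cinner_scale_right: "cinner u (a *s v) = a * cinner u v"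
  by (simp add: cinner_def sum_distrib_left mult_ac)
lemma cinner_scale_left: "cinner (a *s u) v = cnj a * cinner u v"
  by (simp add: cinner_def sum_distrib_left mult_ac)
lemma cinner_zero_right[simp]: "cinner u 0 = 0"
  by (simp add: cinner_def)
lemma cinner_cnj: "cnj (cinner u v) = cinner v u"
  by (simp add: cinner_def mult.commute)
lemma cinner_sum_right: "cinner u (\<Sum>x\<in>S. f x) = (\<Sum>x\<in>S. cinner u (f x))"
  unfolding cinner_def by (simp add: sum_distrib_left sum_component) (rule sum.swap)

lemma norm_sq_cinner: "(norm v)^2 = Re (cinner v v)"
proof -
  have "(norm v)^2 = (\<Sum>i\<in>UNIV. (cmod (v $ i))^2)"
    by (simp add: norm_vec_def L2_set_def sum_nonneg)
  moreover have "cinner v v = (\<Sum>i\<in>UNIV. of_real ((cmod (v $ i))^2))"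
    unfolding cinner_def by (intro sum.cong refl) (simp add: cmod_sq1 cmod_sq2)
  ultimately show ?thesis by (simp add: Re_sum)
qed

lemma cinner_self: "cinner v v = of_real ((norm v)^2)"
proof -
  have "cinner v v = (\<Sum>i\<in>UNIV. of_real ((cmod (v $ i))^2))"
    unfolding cinner_def by (intro sum.cong refl) (simp add: cmod_sq1 cmod_sq2)
  also have "\<dots> = of_real ((norm v)^2)"
    by (simp add: norm_vec_def L2_set_def sum_nonneg)
  finally show ?thesis .
qed

lemma ketbra_mv: "ketbra a *v v = cinner a v *s a"
  by (simp add: vec_eq_iff mv_comp ketbra_def cinner_def sum_distrib_left mult_ac)

definition qf :: "'n::finite cmat \<Rightarrow> complex ^ 'n \<Rightarrow> complex" where
  "qf A v = cinner v (A *v v)"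

lemma qf_ketbra: "qf (ketbra a) v = of_real ((cmod (cinner a v))^2)"
proof -
  have "qf (ketbra a) v = cinner a v * cnj (cinner a v)"
    by (simp add: qf_def ketbra_mv cinner_scale_right cinner_cnj)
  then show ?thesis by (simp add: cmod_sq1)
qed

lemma mv_add: "((A::'n::finite cmat) + B) *v v = A *v v + B *v v"
  by (simp add: vec_eq_iff mv_comp distrib_right sum.distrib)
lemma mv_sum: "(\<Sum>x\<in>S. (A x :: 'n::finite cmat)) *v v = (\<Sum>x\<in>S. A x *v v)"
proof -
  have "\<And>i. (\<Sum>j\<in>UNIV. \<Sum>n\<in>S. A n $ i $ j * v $ j) = (\<Sum>x\<in>S. \<Sum>j\<in>UNIV. A x $ i $ j * v $ j)"
    by (rule sum.swap)
  then show ?thesis by (simp add: vec_eq_iff mv_comp sum_component sum_distrib_right)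
qed
lemma mv_mat1: "mat 1 *v v = v"
  by simp

lemma qf_add: "qf (A + B) v = qf A v + qf B v"
  by (simp add: qf_def mv_add cinner_add_right)
lemma qf_sum: "qf (\<Sum>x\<in>S. A x) v = (\<Sum>x\<in>S. qf (A x) v)"
  by (simp add: qf_def mv_sum cinner_sum_right)
lemma qf_mat1: "qf (mat 1) v = of_real ((norm v)^2)"
  by (simp add: qf_def cinner_self)

lemma qf_parallel: "qf A (u + w) + qf A (u - w) = 2 * qf A u + 2 * qf A w"
  by (simp add: qf_def matrix_vector_right_distrib matrix_vector_mult_diff_distrib
      cinner_add_left cinner_add_right cinner_diff_left cinner_diff_right algebra_simps)

lemma mv_scale: "(A::'n::finite cmat) *v (a *s v) = a *s (A *v v)"
  by (auto simp: vec_eq_iff mv_comp sum_distrib_left intro!: sum.cong)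

lemma qf_scale: "qf A (a *s v) = of_real ((cmod a)^2) * qf A v"
  by (simp add: qf_def mv_scale cinner_scale_left cinner_scale_right cmod_sq1 cmod_sq2 mult_ac)

lemma onb_complete:
  assumes "orthonormal_basis (b :: 'n::finite \<Rightarrow> complex ^ 'n)"
  shows "(\<Sum>x\<in>UNIV. ketbra (b x)) = mat 1"
proof -
  define U :: "complex^'n^'n" where "U = (\<chi> i x. b x $ i)"
  define V :: "complex^'n^'n" where "V = (\<chi> x i. cnj (b x $ i))"
  have "V ** U = mat 1"
    using assms by (simp add: vec_eq_iff matrix_matrix_mult_def V_def U_def mat_def
        orthonormal_basis_def cinner_def)
  then have "U ** V = mat 1" by (simp add: matrix_left_right_inverse)
  then show ?thesis
    by (simp add: vec_eq_iff matrix_matrix_mult_def V_def U_def mat_def sum_component ketbra_def)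
qed

lemma onb_expand:
  assumes "orthonormal_basis (b :: 'n::finite \<Rightarrow> complex ^ 'n)"
  shows "v = (\<Sum>x\<in>UNIV. cinner (b x) v *s b x)"
proof -
  have "v = mat 1 *v v" by simp
  also have "\<dots> = (\<Sum>x\<in>UNIV. ketbra (b x)) *v v" using onb_complete[OF assms] by simp
  also have "\<dots> = (\<Sum>x\<in>UNIV. cinner (b x) v *s b x)" by (simp add: mv_sum ketbra_mv)
  finally show ?thesis .
qed

lemma parseval:
  assumes "orthonormal_basis (b :: 'n::finite \<Rightarrow> complex ^ 'n)"
  shows "(\<Sum>x\<in>UNIV. (cmod (cinner (b x) v))^2) = (norm v)^2"
proof -
  have "complex_of_real ((norm v)^2) = qf (\<Sum>x\<in>UNIV. ketbra (b x)) v"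
    using onb_complete[OF assms] by (simp add: qf_mat1)
  also have "\<dots> = of_real (\<Sum>x\<in>UNIV. (cmod (cinner (b x) v))^2)"
    by (simp add: qf_sum qf_ketbra)
  finally show ?thesis using of_real_eq_iff by metis
qed

lemma onb_inner: "orthonormal_basis b \<Longrightarrow> cinner (b x) (b y) = (if x = y then 1 else 0)"
  by (simp add: orthonormal_basis_def)

lemma onb_norm:
  assumes "orthonormal_basis (b :: 'n::finite \<Rightarrow> complex ^ 'n)"
  shows "norm (b x) = 1"
proof -
  have "complex_of_real ((norm (b x))^2) = 1" using onb_inner[OF assms, of x x] cinner_self by metis
  then have "(norm (b x))^2 = 1" by (metis of_real_eq_1_iff)
  then show ?thesis using norm_ge_zero[of "b x"] by (simp add: power2_eq_1_iff)
qed

lemma bessel1: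
  assumes "orthonormal_basis (b :: 'n::finite \<Rightarrow> complex ^ 'n)"
  shows "(cmod (cinner (b x) v))^2 \<le> (norm v)^2"
proof -
  have "(cmod (cinner (b x) v))^2 \<le> (\<Sum>x\<in>UNIV. (cmod (cinner (b x) v))^2)"
    by (rule member_le_sum) auto
  then show ?thesis using parseval[OF assms] by simp
qed

lemma bessel2:
  assumes "orthonormal_basis (b :: 'n::finite \<Rightarrow> complex ^ 'n)" "x \<noteq> z"
  shows "(cmod (cinner (b x) v))^2 + (cmod (cinner (b z) v))^2 \<le> (norm v)^2"
proof -
  have "(\<Sum>y\<in>{x,z}. (cmod (cinner (b y) v))^2) \<le> (\<Sum>y\<in>UNIV. (cmod (cinner (b y) v))^2)"
    by (rule sum_mono2) auto
  then show ?thesis using parseval[OF assms(1)] assms(2) by simp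
qed

lemma mv_bounded_linear: "bounded_linear (\<lambda>v. (A::'n::finite cmat) *v v)"
  using matrix_vector_mul_linear linear_conv_bounded_linear by blast

lemma opnorm_lower:
  assumes "v \<noteq> 0" "r * norm v \<le> norm (A *v v)"
  shows "r \<le> opnorm A"
proof -
  have "norm (A *v v) \<le> opnorm A * norm v"
    unfolding opnorm_def by (rule onorm[OF mv_bounded_linear])
  then have "r * norm v \<le> opnorm A * norm v" using assms(2) by linarith
  then show ?thesis using assms(1) by simp
qed

lemma opnorm_upper:
  assumes "\<And>v. norm ((A::'n::finite cmat) *v v) \<le> r * norm v"
  shows "opnorm A \<le> r"
  unfolding opnorm_def by (rule onorm_le) (rule assms)

lemma scale_real: "complex_of_real r *s v = r *\<^sub>R (v :: complex ^ 'n)"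
  unfolding vec_eq_iff vector_scaleR_component vector_smult_component by (simp add: scaleR_conv_of_real)

lemma norm_scale: "norm (a *s (v :: complex ^ 'n::finite)) = cmod a * norm v"
proof -
  have "complex_of_real ((norm (a *s v))^2) = cinner (a *s v) (a *s v)" by (simp add: cinner_self)
  also have "\<dots> = (cnj a * a) * cinner v v" by (simp add: cinner_scale_left cinner_scale_right)
  also have "\<dots> = complex_of_real ((cmod a * norm v)^2)" by (simp add: cmod_sq2 cinner_self power_mult_distrib)
  finally have "(norm (a *s v))^2 = (cmod a * norm v)^2" using of_real_eq_iff by blast
  then show ?thesis by (simp add: power2_eq_iff_nonneg)
qed

lemma witness:
  fixes a b :: "complex ^ 'n::finite"
  assumes "cinner a a = 1" "cinner b b = 1" "c = cinner a b"
  obtains \<omega> where "cmod \<omega> = 1"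
    "cinner a (a + \<omega> *s b) = of_real (1 + cmod c)"
    "cinner b (a + \<omega> *s b) = \<omega> * of_real (1 + cmod c)"
    "(ketbra a + ketbra b) *v (a + \<omega> *s b) = of_real (1 + cmod c) *s (a + \<omega> *s b)"
    "(norm (a + \<omega> *s b))^2 = 2 * (1 + cmod c)"
proof -
  define \<omega> where "\<omega> = (if c = 0 then 1 else cnj c / of_real (cmod c))"
  have w1: "cmod \<omega> = 1" by (simp add: \<omega>_def norm_divide)
  have w2: "\<omega> * c = of_real (cmod c)"
  proof (cases "c = 0")
    case False
    then have "cnj c * c / of_real (cmod c) = of_real (cmod c)"
      by (simp add: cmod_sq2 power2_eq_square)
    then show ?thesis using False by (simp add: \<omega>_def)
  qed (simp add: \<omega>_def)
  have w3: "cnj c = \<omega> * of_real (cmod c)"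
    by (cases "c = 0") (simp_all add: \<omega>_def)
  define v where "v = a + \<omega> *s b"
  define r where "r = complex_of_real (1 + cmod c)"
  have i1: "cinner a v = r"
  proof -
    have "cinner a v = cinner a a + \<omega> * cinner a b"
      by (simp add: v_def cinner_add_right cinner_scale_right)
    also have "\<dots> = 1 + \<omega> * c" using assms by simp
    finally show ?thesis using w2 by (simp add: r_def)
  qed
  have i2: "cinner b v = \<omega> * r"
  proof -
    have "cinner b v = cinner b a + \<omega> * cinner b b"
      by (simp add: v_def cinner_add_right cinner_scale_right)
    also have "\<dots> = cnj c + \<omega>"
    proof -
      have "cinner b a = cnj (cinner a b)" by (simp add: cinner_cnj)
      then show ?thesis using assms by simp
    qed
    finally show ?thesis using w3 by (simp add: r_def algebra_simps)
  qed
  have "(ketbra a + ketbra b) *v v = cinner a v *s a + cinner b v *s b"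
    by (simp add: mv_add ketbra_mv)
  also have "\<dots> = r *s a + (\<omega> * r) *s b" using i1 i2 by simp
  also have "\<dots> = r *s v" by (simp add: v_def vec_eq_iff algebra_simps)
  finally have mv: "(ketbra a + ketbra b) *v v = r *s v" .
  have "complex_of_real ((norm v)^2) = cinner v v" by (simp add: cinner_self)
  also have "\<dots> = cinner a v + cnj \<omega> * cinner b v"
    by (subst (1) v_def) (simp add: cinner_add_left cinner_scale_left)
  also have "\<dots> = r + (cnj \<omega> * \<omega>) * r" using i1 i2 by (simp add: mult.assoc)
  also have "\<dots> = 2 * r" using w1 by (simp add: cmod_sq2)
  finally have "complex_of_real ((norm v)^2) = complex_of_real (2 * (1 + cmod c))"
    unfolding r_def by simp
  then have nv: "(norm v)^2 = 2 * (1 + cmod c)" by (simp only: of_real_eq_iff)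
  show ?thesis
    by (rule that[of \<omega>, OF w1 i1[unfolded v_def r_def] i2[unfolded v_def r_def] mv[unfolded v_def r_def] nv[unfolded v_def]])
qed

lemma opnorm_ge:
  fixes a b :: "complex ^ 'n::finite"
  assumes "cinner a a = 1" "cinner b b = 1"
  shows "1 + cmod (cinner a b) \<le> opnorm (ketbra a + ketbra b)"
proof -
  obtain \<omega> where w: "(ketbra a + ketbra b) *v (a + \<omega> *s b) = of_real (1 + cmod (cinner a b)) *s (a + \<omega> *s b)"
    "(norm (a + \<omega> *s b))^2 = 2 * (1 + cmod (cinner a b))"
    using witness[OF assms refl] by metis
  have "a + \<omega> *s b \<noteq> 0"
  proof
    assume "a + \<omega> *s b = 0"
    then have "(norm (a + \<omega> *s b))^2 = 0" by simp
    with w(2) show False by (smt (verit) norm_ge_zero)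
  qed
  moreover have "cmod (complex_of_real (1 + cmod (cinner a b))) = 1 + cmod (cinner a b)"
    by (simp only: norm_of_real) simp
  then have "(1 + cmod (cinner a b)) * norm (a + \<omega> *s b) \<le> norm ((ketbra a + ketbra b) *v (a + \<omega> *s b))"
    unfolding w(1) norm_scale by simp
  ultimately show ?thesis by (rule opnorm_lower)
qed

lemma onb_unit: "orthonormal_basis b \<Longrightarrow> cinner (b x) (b x) = 1"
  by (simp add: onb_inner)

lemma opnorm_same:
  assumes "orthonormal_basis (b :: 'n::finite \<Rightarrow> complex ^ 'n)"
  shows "opnorm (ketbra (b x) + ketbra (b x)) = 2"
proof (rule antisym)
  show "opnorm (ketbra (b x) + ketbra (b x)) \<le> 2"
  proof (rule opnorm_upper)
    fix v
    have "norm ((ketbra (b x) + ketbra (b x)) *v v) \<le> norm (cinner (b x) v *s b x) + norm (cinner (b x) v *s b x)"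
      unfolding mv_add ketbra_mv by (rule norm_triangle_ineq)
    also have "\<dots> = 2 * cmod (cinner (b x) v)" by (simp add: norm_scale onb_norm[OF assms])
    also have "\<dots> \<le> 2 * norm v"
      using power2_le_imp_le[OF bessel1[OF assms, of x v]] by simp
    finally show "norm ((ketbra (b x) + ketbra (b x)) *v v) \<le> 2 * norm v" .
  qed
  show "2 \<le> opnorm (ketbra (b x) + ketbra (b x))"
    using opnorm_ge[OF onb_unit[OF assms] onb_unit[OF assms], of x x] onb_unit[OF assms, of x] by simp
qed

lemma opnorm_diff:
  assumes "orthonormal_basis (b :: 'n::finite \<Rightarrow> complex ^ 'n)" "x \<noteq> z"
  shows "opnorm (ketbra (b x) + ketbra (b z)) = 1"
proof (rule antisym)
  show "opnorm (ketbra (b x) + ketbra (b z)) \<le> 1"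
  proof (rule opnorm_upper)
    fix v
    define \<alpha> where "\<alpha> = cinner (b x) v"
    define \<beta> where "\<beta> = cinner (b z) v"
    have "complex_of_real ((norm ((ketbra (b x) + ketbra (b z)) *v v))^2)
        = cinner (\<alpha> *s b x + \<beta> *s b z) (\<alpha> *s b x + \<beta> *s b z)"
      unfolding mv_add ketbra_mv \<alpha>_def \<beta>_def by (rule cinner_self[symmetric])
    also have "\<dots> = cnj \<alpha> * \<alpha> + cnj \<beta> * \<beta>"
      using onb_inner[OF assms(1)] assms(2)
      by (simp add: cinner_add_left cinner_add_right cinner_scale_left cinner_scale_right)
    also have "\<dots> = complex_of_real ((cmod \<alpha>)^2 + (cmod \<beta>)^2)" by (simp add: cmod_sq2)
    finally have "(norm ((ketbra (b x) + ketbra (b z)) *v v))^2 = (cmod \<alpha>)^2 + (cmod \<beta>)^2"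
      by (simp only: of_real_eq_iff)
    also have "\<dots> \<le> (norm v)^2" unfolding \<alpha>_def \<beta>_def by (rule bessel2[OF assms])
    finally have "norm ((ketbra (b x) + ketbra (b z)) *v v) \<le> norm v"
      by (rule power2_le_imp_le) simp
    then show "norm ((ketbra (b x) + ketbra (b z)) *v v) \<le> 1 * norm v" by simp
  qed
  show "1 \<le> opnorm (ketbra (b x) + ketbra (b z))"
    using opnorm_ge[OF onb_unit[OF assms(1)] onb_unit[OF assms(1)], of x z] onb_inner[OF assms(1), of x z] assms(2)
    by simp
qed

lemma cmod_cinner_sym: "cmod (cinner u v) = cmod (cinner v u)"
  by (metis cinner_cnj complex_mod_cnj)

lemma row_sum:
  assumes "orthonormal_basis \<phi>" "orthonormal_basis \<psi>"
  shows "(\<Sum>y\<in>UNIV. (cmod (cinner (\<phi> x) (\<psi> y)))^2) = 1"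
  using parseval[OF assms(2), of "\<phi> x"] onb_norm[OF assms(1), of x]
  by (simp add: cmod_cinner_sym)

lemma col_sum:
  assumes "orthonormal_basis \<phi>" "orthonormal_basis \<psi>"
  shows "(\<Sum>x\<in>UNIV. (cmod (cinner (\<phi> x) (\<psi> y)))^2) = 1"
  using parseval[OF assms(1), of "\<psi> y"] onb_norm[OF assms(2), of y] by simp

lemma cmod_le1:
  assumes "orthonormal_basis \<phi>" "orthonormal_basis \<psi>"
  shows "cmod (cinner (\<phi> x) (\<psi> y)) \<le> 1"
proof -
  have "(cmod (cinner (\<phi> x) (\<psi> y)))^2 \<le> (\<Sum>x\<in>UNIV. (cmod (cinner (\<phi> x) (\<psi> y)))^2)"
    by (rule member_le_sum) auto
  then have "(cmod (cinner (\<phi> x) (\<psi> y)))^2 \<le> 1^2" using col_sum[OF assms] by simp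
  then show ?thesis by (rule power2_le_imp_le) simp
qed

lemma total_sq:
  assumes "orthonormal_basis \<phi>" "orthonormal_basis (\<psi> :: 'n::finite \<Rightarrow> complex ^ 'n)"
  shows "(\<Sum>x\<in>UNIV. \<Sum>y\<in>UNIV. (cmod (cinner (\<phi> x) (\<psi> y)))^2) = real CARD('n)"
  using row_sum[OF assms] by simp

lemma S_ge:
  assumes "orthonormal_basis \<phi>" "orthonormal_basis (\<psi> :: 'n::finite \<Rightarrow> complex ^ 'n)"
  shows "real CARD('n) \<le> (\<Sum>x\<in>UNIV. \<Sum>y\<in>UNIV. cmod (cinner (\<phi> x) (\<psi> y)))"
proof -
  have "\<And>x y. (cmod (cinner (\<phi> x) (\<psi> y)))^2 \<le> cmod (cinner (\<phi> x) (\<psi> y))"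
  proof -
    fix x y
    have "cmod (cinner (\<phi> x) (\<psi> y)) * cmod (cinner (\<phi> x) (\<psi> y)) \<le> 1 * cmod (cinner (\<phi> x) (\<psi> y))"
      by (rule mult_right_mono[OF cmod_le1[OF assms]]) simp
    then show "(cmod (cinner (\<phi> x) (\<psi> y)))^2 \<le> cmod (cinner (\<phi> x) (\<psi> y))"
      by (simp add: power2_eq_square)
  qed
  then have "(\<Sum>x\<in>UNIV. \<Sum>y\<in>UNIV. (cmod (cinner (\<phi> x) (\<psi> y)))^2)
      \<le> (\<Sum>x\<in>UNIV. \<Sum>y\<in>UNIV. cmod (cinner (\<phi> x) (\<psi> y)))"
    by (intro sum_mono) auto
  then show ?thesis using total_sq[OF assms] by simp
qed

lemma P_lower:
  assumes "orthonormal_basis \<phi>" "orthonormal_basis (\<psi> :: 'n::finite \<Rightarrow> complex ^ 'n)"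
  shows "(real CARD('n) ^ 2 + (\<Sum>x\<in>UNIV. \<Sum>y\<in>UNIV. cmod (cinner (\<phi> x) (\<psi> y)))) / (2 * real CARD('n)^2)
     \<le> P_qrac (\<lambda>x. ketbra (\<phi> x)) (\<lambda>y. ketbra (\<psi> y))"
proof -
  have "(\<Sum>x\<in>UNIV. \<Sum>y\<in>UNIV. 1 + cmod (cinner (\<phi> x) (\<psi> y)))
     \<le> (\<Sum>x\<in>UNIV. \<Sum>y\<in>UNIV. opnorm (ketbra (\<phi> x) + ketbra (\<psi> y)))"
    by (intro sum_mono opnorm_ge onb_unit assms)
  moreover have "(\<Sum>x\<in>UNIV. \<Sum>y\<in>UNIV. 1 + cmod (cinner (\<phi> x) (\<psi> y)))
     = real CARD('n) ^ 2 + (\<Sum>x\<in>UNIV. \<Sum>y\<in>UNIV. cmod (cinner (\<phi> x) (\<psi> y)))"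
    by (simp add: sum.distrib power2_eq_square)
  ultimately show ?thesis unfolding P_qrac_def
    by (simp add: divide_right_mono)
qed

lemma ketbra_phase:
  assumes "cmod \<alpha> = 1"
  shows "ketbra (\<alpha> *s a) = ketbra a"
proof -
  have "cnj \<alpha> * \<alpha> = 1" using assms by (simp add: cmod_sq2)
  then show ?thesis
    by (simp add: ketbra_def vec_eq_iff) (metis (no_types, lifting) mult.assoc mult.commute mult.left_commute mult_1)
qed

lemma S_eq_perm:
  assumes on1: "orthonormal_basis \<phi>" and on2: "orthonormal_basis (\<psi> :: 'n::finite \<Rightarrow> complex ^ 'n)"
    and S: "(\<Sum>x\<in>UNIV. \<Sum>y\<in>UNIV. cmod (cinner (\<phi> x) (\<psi> y))) = real CARD('n)"
  shows "\<exists>\<sigma>. \<sigma> permutes UNIV \<and> (\<forall>y. ketbra (\<psi> y) = ketbra (\<phi> (\<sigma> y)))"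
proof -
  define t where "t x y = cmod (cinner (\<phi> x) (\<psi> y))" for x y
  have t0: "0 \<le> t x y" for x y by (simp add: t_def)
  have t1: "t x y \<le> 1" for x y unfolding t_def by (rule cmod_le1[OF on1 on2])
  have nn: "0 \<le> t x y - (t x y)^2" for x y
  proof -
    have "t x y * t x y \<le> 1 * t x y" by (rule mult_right_mono[OF t1 t0])
    then show ?thesis by (simp add: power2_eq_square)
  qed
  have "(\<Sum>x\<in>UNIV. \<Sum>y\<in>UNIV. t x y - (t x y)^2) = 0"
    using S total_sq[OF on1 on2] by (simp add: sum_subtractf t_def)
  then have "\<forall>x\<in>UNIV. (\<Sum>y\<in>UNIV. t x y - (t x y)^2) = 0"
    by (subst (asm) sum_nonneg_eq_0_iff) (auto intro: sum_nonneg nn)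
  then have "\<forall>x y. t x y - (t x y)^2 = 0"
    using sum_nonneg_eq_0_iff[of UNIV "\<lambda>y. t _ y - (t _ y)^2"] nn by auto
  then have t01: "t x y = 0 \<or> t x y = 1" for x y
    by (metis diff_self_eq_0 power2_eq_square mult_cancel_left1 eq_iff_diff_eq_0)
  have cs: "(\<Sum>x\<in>UNIV. (t x y)^2) = 1" for y unfolding t_def by (rule col_sum[OF on1 on2])
  have rs: "(\<Sum>y\<in>UNIV. (t x y)^2) = 1" for x unfolding t_def by (rule row_sum[OF on1 on2])
  have ex: "\<exists>x. t x y = 1" for y
  proof (rule ccontr)
    assume "\<not> (\<exists>x. t x y = 1)"
    then have "\<forall>x. t x y = 0" using t01 by blast
    then show False using cs[of y] by simp
  qed
  define \<sigma> where "\<sigma> y = (SOME x. t x y = 1)" for y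
  have s1: "t (\<sigma> y) y = 1" for y unfolding \<sigma>_def by (rule someI_ex[OF ex])
  have oth: "t x y = 0" if "x \<noteq> \<sigma> y" for x y
  proof -
    have "1 = (t (\<sigma> y) y)^2 + (\<Sum>x\<in>UNIV - {\<sigma> y}. (t x y)^2)"
      using cs[of y] sum.remove[of UNIV "\<sigma> y" "\<lambda>x. (t x y)^2"] by simp
    then have "(\<Sum>x\<in>UNIV - {\<sigma> y}. (t x y)^2) = 0" using s1 by simp
    then have "\<forall>x\<in>UNIV - {\<sigma> y}. (t x y)^2 = 0" by (subst (asm) sum_nonneg_eq_0_iff) auto
    then show ?thesis using that by simp
  qed
  have inj: "inj \<sigma>"
  proof (rule injI, rule ccontr)
    fix y1 y2 assume e: "\<sigma> y1 = \<sigma> y2" and ne: "y1 \<noteq> y2"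
    have "(\<Sum>y\<in>{y1,y2}. (t (\<sigma> y1) y)^2) \<le> (\<Sum>y\<in>UNIV. (t (\<sigma> y1) y)^2)"
      by (rule sum_mono2) auto
    then show False using ne rs[of "\<sigma> y1"] s1[of y1] s1[of y2] e by simp
  qed
  have perm: "\<sigma> permutes UNIV"
    by (rule bij_imp_permutes) (use inj finite_UNIV_inj_surj[of \<sigma>] in \<open>auto simp: bij_betw_def\<close>)
  have "ketbra (\<psi> y) = ketbra (\<phi> (\<sigma> y))" for y
  proof -
    have "\<psi> y = (\<Sum>x\<in>UNIV. cinner (\<phi> x) (\<psi> y) *s \<phi> x)" by (rule onb_expand[OF on1])
    also have "\<dots> = cinner (\<phi> (\<sigma> y)) (\<psi> y) *s \<phi> (\<sigma> y)
        + (\<Sum>x\<in>UNIV - {\<sigma> y}. cinner (\<phi> x) (\<psi> y) *s \<phi> x)"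
      by (rule sum.remove) auto
    also have "(\<Sum>x\<in>UNIV - {\<sigma> y}. cinner (\<phi> x) (\<psi> y) *s \<phi> x) = 0"
      by (rule sum.neutral) (use oth in \<open>auto simp: t_def\<close>)
    finally have "\<psi> y = cinner (\<phi> (\<sigma> y)) (\<psi> y) *s \<phi> (\<sigma> y)" by simp
    then show ?thesis using ketbra_phase s1[of y] unfolding t_def by metis
  qed
  with perm show ?thesis by blast
qed

lemma psd_ketbra: "psd (ketbra a)"
  unfolding psd_def using qf_ketbra[of a] by (simp add: qf_def)

lemma psd_zero: "psd (0 :: 'n::finite cmat)"
  unfolding psd_def by (simp add: cinner_def)

lemma perm_compat:
  assumes on1: "orthonormal_basis (\<phi> :: 'n::finite \<Rightarrow> complex ^ 'n)"
    and M1: "\<And>x. M1 x = ketbra (\<phi> x)"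
    and p: "\<sigma> permutes UNIV" and M2: "\<And>y. M2 y = M1 (\<sigma> y)"
  shows "compatible M1 M2"
  unfolding compatible_def
proof (intro exI conjI allI)
  define G :: "'n \<times> 'n \<Rightarrow> 'n cmat" where "G p = (if fst p = \<sigma> (snd p) then M1 (fst p) else 0)" for p
  have eq: "(x = \<sigma> y) = (y = inv \<sigma> x)" for x y
    using permutes_inverses[OF p] by metis
  have row: "(\<Sum>y\<in>UNIV. G (x, y)) = M1 x" for x
    unfolding G_def by (simp add: eq)
  show "(\<Sum>y\<in>UNIV. G (x, y)) = M1 x" for x by (rule row)
  show "(\<Sum>x\<in>UNIV. G (x, y)) = M2 y" for y
    unfolding G_def M2 by simp
  show "povm G"
    unfolding povm_def
  proof
    show "\<forall>x. psd (G x)" by (simp add: G_def M1 psd_ketbra psd_zero)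
    have "(\<Sum>p\<in>UNIV. G p) = (\<Sum>x\<in>UNIV. \<Sum>y\<in>UNIV. G (x, y))"
      by (simp add: sum.cartesian_product)
    also have "\<dots> = (\<Sum>x\<in>UNIV. ketbra (\<phi> x))" by (simp add: row M1)
    also have "\<dots> = mat 1" by (rule onb_complete[OF on1])
    finally show "(\<Sum>p\<in>UNIV. G p) = mat 1" .
  qed
qed

lemma perm_P:
  assumes on1: "orthonormal_basis (\<phi> :: 'n::finite \<Rightarrow> complex ^ 'n)"
    and p: "\<sigma> permutes UNIV" and eq: "\<And>y. ketbra (\<psi> y) = ketbra (\<phi> (\<sigma> y))"
  shows "P_qrac (\<lambda>x. ketbra (\<phi> x)) (\<lambda>y. ketbra (\<psi> y)) = 1/2 * (1 + 1 / real CARD('n))"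
proof -
  have inner: "(\<Sum>y\<in>UNIV. opnorm (ketbra (\<phi> x) + ketbra (\<psi> y))) = real CARD('n) + 1" for x
  proof -
    have "(\<Sum>y\<in>UNIV. opnorm (ketbra (\<phi> x) + ketbra (\<psi> y)))
        = (\<Sum>y\<in>UNIV. opnorm (ketbra (\<phi> x) + ketbra (\<phi> (\<sigma> y))))" by (simp add: eq)
    also have "\<dots> = (\<Sum>z\<in>UNIV. opnorm (ketbra (\<phi> x) + ketbra (\<phi> z)))"
      using sum.permute[OF p, of "\<lambda>z. opnorm (ketbra (\<phi> x) + ketbra (\<phi> z))"] by (simp add: o_def)
    also have "\<dots> = (\<Sum>z\<in>UNIV. 1 + (if x = z then 1 else 0))"
    proof (intro sum.cong refl)
      fix z
      show "opnorm (ketbra (\<phi> x) + ketbra (\<phi> z)) = 1 + (if x = z then 1 else 0)"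
      proof (cases "x = z")
        case True
        then show ?thesis using opnorm_same[OF on1, of x] by simp
      next
        case False
        then show ?thesis using opnorm_diff[OF on1 False] by simp
      qed
    qed
    also have "\<dots> = real CARD('n) + 1" by (simp add: sum.distrib)
    finally show ?thesis .
  qed
  have "P_qrac (\<lambda>x. ketbra (\<phi> x)) (\<lambda>y. ketbra (\<psi> y))
      = (1 / (2 * real CARD('n)^2)) * (real CARD('n) * (real CARD('n) + 1))"
    unfolding P_qrac_def inner by simp
  also have "\<dots> = 1/2 * (1 + 1 / real CARD('n))"
    by (simp add: field_simps power2_eq_square)
  finally show ?thesis .
qed

lemma comb_ineq:
  fixes f :: "'a::finite \<Rightarrow> 'b::finite \<Rightarrow> real"
  assumes "\<And>x y. 0 \<le> f x y"
  shows "(\<Sum>y'\<in>UNIV. f x y') + (\<Sum>x'\<in>UNIV. f x' y) \<le> f x y + (\<Sum>x'\<in>UNIV. \<Sum>y'\<in>UNIV. f x' y')"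
proof -
  have a: "(\<Sum>x'\<in>UNIV. \<Sum>y'\<in>UNIV. f x' y') = (\<Sum>y'\<in>UNIV. f x y') + (\<Sum>x'\<in>UNIV - {x}. \<Sum>y'\<in>UNIV. f x' y')"
    by (rule sum.remove) auto
  have b: "(\<Sum>x'\<in>UNIV. f x' y) = f x y + (\<Sum>x'\<in>UNIV - {x}. f x' y)"
    by (rule sum.remove) auto
  have c: "(\<Sum>x'\<in>UNIV - {x}. f x' y) \<le> (\<Sum>x'\<in>UNIV - {x}. \<Sum>y'\<in>UNIV. f x' y')"
    by (intro sum_mono member_le_sum) (auto intro: assms)
  show ?thesis using a b c by linarith
qed

lemma qf_nonneg: "psd A \<Longrightarrow> 0 \<le> Re (qf A v)"
  by (simp add: psd_def qf_def)

lemma compat_S: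
  assumes on1: "orthonormal_basis \<phi>" and on2: "orthonormal_basis (\<psi> :: 'n::finite \<Rightarrow> complex ^ 'n)"
    and M1: "\<And>x. M1 x = ketbra (\<phi> x)" and M2: "\<And>y. M2 y = ketbra (\<psi> y)"
    and comp: "compatible M1 M2"
  shows "(\<Sum>x\<in>UNIV. \<Sum>y\<in>UNIV. cmod (cinner (\<phi> x) (\<psi> y))) \<le> real CARD('n)"
proof -
  obtain G :: "'n \<times> 'n \<Rightarrow> 'n cmat" where pv: "povm G"
    and r: "\<And>x. (\<Sum>y\<in>UNIV. G (x, y)) = M1 x" and c: "\<And>y. (\<Sum>x\<in>UNIV. G (x, y)) = M2 y"
    using comp unfolding compatible_def by blast
  have psdG: "psd (G p)" for p using pv unfolding povm_def by (cases p) auto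
  have tot: "(\<Sum>x\<in>UNIV. \<Sum>y\<in>UNIV. G (x, y)) = mat 1"
    using pv by (simp add: povm_def sum.cartesian_product)
  define g where "g x y = Re (qf (G (x, y)) (\<phi> x))" for x y
  define h where "h x y = Re (qf (G (x, y)) (\<psi> y))" for x y
  have key: "cmod (cinner (\<phi> x) (\<psi> y)) + (cmod (cinner (\<phi> x) (\<psi> y)))^2 \<le> g x y + h x y" for x y
  proof -
    define t where "t = cmod (cinner (\<phi> x) (\<psi> y))"
    have t0: "0 \<le> t" by (simp add: t_def)
    obtain \<omega> where w1: "cmod \<omega> = 1"
      and i1: "cinner (\<phi> x) (\<phi> x + \<omega> *s \<psi> y) = of_real (1 + t)"
      and i2: "cinner (\<psi> y) (\<phi> x + \<omega> *s \<psi> y) = \<omega> * of_real (1 + t)"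
      and nv: "(norm (\<phi> x + \<omega> *s \<psi> y))^2 = 2 * (1 + t)"
      using witness[OF onb_unit[OF on1] onb_unit[OF on2] refl, of x y] unfolding t_def by metis
    define v where "v = \<phi> x + \<omega> *s \<psi> y"
    define F where "F x' y' = Re (qf (G (x', y')) v)" for x' y'
    have F0: "0 \<le> F x' y'" for x' y' unfolding F_def by (rule qf_nonneg[OF psdG])
    have cm1: "cmod (complex_of_real (1 + t)) = 1 + t" using t0 by (simp only: norm_of_real)
    have e1: "(\<Sum>y'\<in>UNIV. F x y') = (1 + t)^2"
    proof -
      have "(\<Sum>y'\<in>UNIV. F x y') = Re (qf (\<Sum>y'\<in>UNIV. G (x, y')) v)"
        by (simp add: F_def qf_sum Re_sum)
      also have "\<dots> = (cmod (cinner (\<phi> x) v))^2" by (simp add: r M1 qf_ketbra)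
      also have "\<dots> = (1 + t)^2" using i1 cm1 by (simp add: v_def)
      finally show ?thesis .
    qed
    have e2: "(\<Sum>x'\<in>UNIV. F x' y) = (1 + t)^2"
    proof -
      have "(\<Sum>x'\<in>UNIV. F x' y) = Re (qf (\<Sum>x'\<in>UNIV. G (x', y)) v)"
        by (simp add: F_def qf_sum Re_sum)
      also have "\<dots> = (cmod (cinner (\<psi> y) v))^2" by (simp add: c M2 qf_ketbra)
      also have "\<dots> = (1 + t)^2" using i2 cm1 w1 by (simp add: v_def norm_mult)
      finally show ?thesis .
    qed
    have e3: "(\<Sum>x'\<in>UNIV. \<Sum>y'\<in>UNIV. F x' y') = 2 * (1 + t)"
    proof -
      have "(\<Sum>x'\<in>UNIV. \<Sum>y'\<in>UNIV. F x' y') = Re (qf (\<Sum>x'\<in>UNIV. \<Sum>y'\<in>UNIV. G (x', y')) v)"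
        by (simp add: F_def qf_sum Re_sum)
      also have "\<dots> = (norm v)^2" by (simp add: tot qf_mat1)
      finally show ?thesis using nv by (simp add: v_def)
    qed
    have par: "F x y \<le> 2 * g x y + 2 * h x y"
    proof -
      have "qf (G (x, y)) (\<phi> x + \<omega> *s \<psi> y) + qf (G (x, y)) (\<phi> x - \<omega> *s \<psi> y)
          = 2 * qf (G (x, y)) (\<phi> x) + 2 * qf (G (x, y)) (\<omega> *s \<psi> y)" by (rule qf_parallel)
      also have "qf (G (x, y)) (\<omega> *s \<psi> y) = qf (G (x, y)) (\<psi> y)" using w1 by (simp add: qf_scale)
      finally have "Re (qf (G (x, y)) v) + Re (qf (G (x, y)) (\<phi> x - \<omega> *s \<psi> y)) = 2 * g x y + 2 * h x y"
        unfolding v_def g_def h_def by (metis Re_complex_of_real mult_2 plus_complex.sel(1))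
      moreover have "0 \<le> Re (qf (G (x, y)) (\<phi> x - \<omega> *s \<psi> y))" by (rule qf_nonneg[OF psdG])
      ultimately show ?thesis unfolding F_def by linarith
    qed
    have "(\<Sum>y'\<in>UNIV. F x y') + (\<Sum>x'\<in>UNIV. F x' y) \<le> F x y + (\<Sum>x'\<in>UNIV. \<Sum>y'\<in>UNIV. F x' y')"
      by (rule comb_ineq[OF F0])
    then have "(1 + t)^2 + (1 + t)^2 \<le> 2 * g x y + 2 * h x y + 2 * (1 + t)"
      using e1 e2 e3 par by linarith
    moreover have "(1 + t)^2 = 1 + 2 * t + t^2" by (simp add: power2_eq_square algebra_simps)
    ultimately have "t + t^2 \<le> g x y + h x y" by (smt (verit))
    then show ?thesis by (simp add: t_def)
  qed
  have sg: "(\<Sum>x\<in>UNIV. \<Sum>y\<in>UNIV. g x y) = real CARD('n)"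
  proof -
    have "(\<Sum>y\<in>UNIV. g x y) = 1" for x
    proof -
      have "(\<Sum>y\<in>UNIV. g x y) = Re (qf (\<Sum>y\<in>UNIV. G (x, y)) (\<phi> x))"
        by (simp add: g_def qf_sum Re_sum)
      also have "\<dots> = (cmod (cinner (\<phi> x) (\<phi> x)))^2" by (simp add: r M1 qf_ketbra)
      also have "\<dots> = 1" by (simp add: onb_unit[OF on1])
      finally show ?thesis .
    qed
    then show ?thesis by simp
  qed
  have sh: "(\<Sum>x\<in>UNIV. \<Sum>y\<in>UNIV. h x y) = real CARD('n)"
  proof -
    have "(\<Sum>x\<in>UNIV. h x y) = 1" for y
    proof -
      have "(\<Sum>x\<in>UNIV. h x y) = Re (qf (\<Sum>x\<in>UNIV. G (x, y)) (\<psi> y))"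
        by (simp add: h_def qf_sum Re_sum)
      also have "\<dots> = (cmod (cinner (\<psi> y) (\<psi> y)))^2" by (simp add: c M2 qf_ketbra)
      also have "\<dots> = 1" by (simp add: onb_unit[OF on2])
      finally show ?thesis .
    qed
    then have "(\<Sum>y\<in>UNIV. \<Sum>x\<in>UNIV. h x y) = real CARD('n)" by simp
    then show ?thesis by (subst sum.swap) simp
  qed
  have "(\<Sum>x\<in>UNIV. \<Sum>y\<in>UNIV. cmod (cinner (\<phi> x) (\<psi> y)) + (cmod (cinner (\<phi> x) (\<psi> y)))^2)
      \<le> (\<Sum>x\<in>UNIV. \<Sum>y\<in>UNIV. g x y + h x y)"
    by (intro sum_mono key)
  then have "(\<Sum>x\<in>UNIV. \<Sum>y\<in>UNIV. cmod (cinner (\<phi> x) (\<psi> y)))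
      + (\<Sum>x\<in>UNIV. \<Sum>y\<in>UNIV. (cmod (cinner (\<phi> x) (\<psi> y)))^2)
      \<le> (\<Sum>x\<in>UNIV. \<Sum>y\<in>UNIV. g x y) + (\<Sum>x\<in>UNIV. \<Sum>y\<in>UNIV. h x y)"
    by (simp add: sum.distrib)
  then show ?thesis using sg sh total_sq[OF on1 on2] by linarith
qed

theorem proposition1:
  fixes \<phi> \<psi> :: "'n::finite \<Rightarrow> complex ^ 'n"
    and M1 M2 :: "'n \<Rightarrow> 'n cmat"
  assumes "CARD('n) \<ge> 2"
    and "orthonormal_basis \<phi>" and "orthonormal_basis \<psi>"
    and "\<And>x. M1 x = ketbra (\<phi> x)" and "\<And>y. M2 y = ketbra (\<psi> y)"
  shows "P_qrac M1 M2 \<ge> 1/2 * (1 + 1 / real CARD('n)) \<and>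
         (P_qrac M1 M2 = 1/2 * (1 + 1 / real CARD('n)) \<longleftrightarrow> compatible M1 M2) \<and>
         (compatible M1 M2 \<longleftrightarrow> (\<exists>\<sigma>. \<sigma> permutes UNIV \<and> (\<forall>y. M2 y = M1 (\<sigma> y))))"
proof -
  note on1 = assms(2) and on2 = assms(3)
  have M1e: "M1 = (\<lambda>x. ketbra (\<phi> x))" using assms(4) by auto
  have M2e: "M2 = (\<lambda>y. ketbra (\<psi> y))" using assms(5) by auto
  define d where "d = real CARD('n)"
  have dpos: "0 < d" unfolding d_def by simp
  define S where "S = (\<Sum>x\<in>UNIV. \<Sum>y\<in>UNIV. cmod (cinner (\<phi> x) (\<psi> y)))"
  have Sge: "d \<le> S" unfolding d_def S_def by (rule S_ge[OF on1 on2])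
  have PL: "(d^2 + S) / (2 * d^2) \<le> P_qrac M1 M2"
    unfolding M1e M2e d_def S_def by (rule P_lower[OF on1 on2])
  have bnd: "1/2 * (1 + 1 / d) = (d^2 + d) / (2 * d^2)"
    using dpos by (simp add: field_simps power2_eq_square)
  have part1: "1/2 * (1 + 1 / d) \<le> P_qrac M1 M2"
  proof -
    have "(d^2 + d) / (2 * d^2) \<le> (d^2 + S) / (2 * d^2)"
      using Sge dpos by (intro divide_right_mono) auto
    then show ?thesis using PL bnd by linarith
  qed
  have S_perm: "\<exists>\<sigma>. \<sigma> permutes UNIV \<and> (\<forall>y. M2 y = M1 (\<sigma> y))" if "S \<le> d"
  proof -
    have "S = d" using that Sge by linarith
    then obtain \<sigma> where "\<sigma> permutes UNIV" "\<forall>y. ketbra (\<psi> y) = ketbra (\<phi> (\<sigma> y))"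
      using S_eq_perm[OF on1 on2] unfolding S_def d_def by blast
    then show ?thesis using assms(4,5) by metis
  qed
  have c_perm: "compatible M1 M2 \<Longrightarrow> \<exists>\<sigma>. \<sigma> permutes UNIV \<and> (\<forall>y. M2 y = M1 (\<sigma> y))"
    using S_perm compat_S[OF on1 on2 assms(4,5)] unfolding S_def d_def by blast
  have perm_c: "compatible M1 M2" if "\<exists>\<sigma>. \<sigma> permutes UNIV \<and> (\<forall>y. M2 y = M1 (\<sigma> y))"
    using that perm_compat[OF on1 assms(4)] by blast
  have part3: "compatible M1 M2 \<longleftrightarrow> (\<exists>\<sigma>. \<sigma> permutes UNIV \<and> (\<forall>y. M2 y = M1 (\<sigma> y)))"
    using c_perm perm_c by blast
  have part2: "P_qrac M1 M2 = 1/2 * (1 + 1 / d) \<longleftrightarrow> compatible M1 M2"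
  proof
    assume "P_qrac M1 M2 = 1/2 * (1 + 1 / d)"
    then have "(d^2 + S) / (2 * d^2) \<le> (d^2 + d) / (2 * d^2)" using PL bnd by linarith
    then have "d^2 + S \<le> d^2 + d" using dpos by (simp add: divide_le_cancel)
    then have "S \<le> d" by linarith
    then show "compatible M1 M2" using S_perm perm_c by blast
  next
    assume "compatible M1 M2"
    then obtain \<sigma> where p: "\<sigma> permutes UNIV" and e: "\<forall>y. M2 y = M1 (\<sigma> y)" using c_perm by blast
    have "\<And>y. ketbra (\<psi> y) = ketbra (\<phi> (\<sigma> y))" using e assms(4,5) by metis
    then show "P_qrac M1 M2 = 1/2 * (1 + 1 / d)"
      unfolding M1e M2e d_def by (rule perm_P[OF on1 p])
  qed
  show ?thesis using part1 part2 part3 unfolding d_def by blast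
qed

end
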